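(* Fix $\theta>0$ and let $n\to\infty$ along integers for which $m=\theta n$ is an integer. If $\mathbf s$ is uniform on $\Phi^*_{m,n}$, then $$\mathbb E\left(\prod_{\nu=1}^m(s_\nu+1)\right)\sim\left(\frac{2(\theta+1)}{2\theta+1}\right)^{1/2}\left[\frac{(2\theta+1)^{2\theta+1}}{(4\theta)^\theta(\theta+1)^{\theta+1}}\right]^n .$$ In particular, for $\theta=1$ this is $\sim(4/3)^{1/2}(27/16)^n$.
   Context: $\Phi^*_{m,n}$ is the set of arrays $\mathbf s=(s_1,\dots,s_m)$ of nonnegative integers with $s_1+\dots+s_m=n$. $f\sim g$ means $f/g\to1$. *)

theory Defs
  imports "HOL-Probability.Probability" "HOL-Library.Landau_Symbols"
begin

definition Phi_star :: "nat \<Rightarrow> nat \<Rightarrow> (nat \<Rightarrow> nat) set" where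
  "Phi_star m n = {s. (\<forall>i. i \<notin> {1..m} \<longrightarrow> s i = 0) \<and> (\<Sum>i=1..m. s i) = n}"

definition E_prod :: "nat \<Rightarrow> nat \<Rightarrow> real" where
  "E_prod m n = measure_pmf.expectation (pmf_of_set (Phi_star m n))
      (\<lambda>s. \<Prod>\<nu>=1..m. real (s \<nu> + 1))"

end

theory Submission
  imports Defs
begin


lemma Phi_one: "Phi_star (Suc 0) n = {(\<lambda>i. if i = 1 then n else 0)}"
  unfolding Phi_star_def by (auto intro!: ext)

lemma Phi_SucSuc: "Phi_star (Suc (Suc m)) n =
   (\<lambda>(k,t). t(Suc (Suc m) := k)) ` (SIGMA k:{..n}. Phi_star (Suc m) (n-k))"
proof
  show "Phi_star (Suc (Suc m)) n \<subseteq> (\<lambda>(k,t). t(Suc (Suc m) := k)) ` (SIGMA k:{..n}. Phi_star (Suc m) (n-k))"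
  proof
    fix s assume s: "s \<in> Phi_star (Suc (Suc m)) n"
    have sum: "(\<Sum>i=1..Suc m. s i) + s (Suc (Suc m)) = n"
      using s unfolding Phi_star_def by (simp add: sum.cl_ivl_Suc)
    have eq: "(\<Sum>i=1..Suc m. (s(Suc (Suc m) := 0)) i) = (\<Sum>i=1..Suc m. s i)"
      by (rule sum.cong) auto
    have "s(Suc (Suc m) := 0) \<in> Phi_star (Suc m) (n - s (Suc (Suc m)))"
      using s sum eq unfolding Phi_star_def by auto
    moreover have "s = (s(Suc (Suc m) := 0))(Suc (Suc m) := s (Suc (Suc m)))" by simp
    moreover have "s (Suc (Suc m)) \<le> n" using sum by simp
    ultimately show "s \<in> (\<lambda>(k,t). t(Suc (Suc m) := k)) ` (SIGMA k:{..n}. Phi_star (Suc m) (n-k))"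
      by (intro image_eqI[where x="(s (Suc (Suc m)), s(Suc (Suc m) := 0))"]) auto
  qed
next
  show "(\<lambda>(k,t). t(Suc (Suc m) := k)) ` (SIGMA k:{..n}. Phi_star (Suc m) (n-k)) \<subseteq> Phi_star (Suc (Suc m)) n"
  proof
    fix x assume "x \<in> (\<lambda>(k,t). t(Suc (Suc m) := k)) ` (SIGMA k:{..n}. Phi_star (Suc m) (n-k))"
    then obtain k t where k: "k \<in> {..n}" and t: "t \<in> Phi_star (Suc m) (n - k)" and x: "x = t(Suc (Suc m) := k)"
      by auto
    have eq: "(\<Sum>i=1..Suc m. (t(Suc (Suc m) := k)) i) = (\<Sum>i=1..Suc m. t i)"
      by (rule sum.cong) auto
    have "(\<Sum>i=1..Suc (Suc m). (t(Suc (Suc m) := k)) i) = (\<Sum>i=1..Suc m. t i) + k"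
      using eq by (simp add: sum.cl_ivl_Suc)
    also have "\<dots> = n" using k t unfolding Phi_star_def by auto
    finally show "x \<in> Phi_star (Suc (Suc m)) n"
      using t unfolding Phi_star_def x by auto
  qed
qed

lemma Phi_inj: "inj_on (\<lambda>(k,t). t(Suc (Suc m) := k)) (SIGMA k:{..n}. Phi_star (Suc m) (n-k))"
proof (rule inj_onI, clarify)
  fix k t k' t'
  assume t: "t \<in> Phi_star (Suc m) (n - k)" and t': "t' \<in> Phi_star (Suc m) (n - k')"
    and e: "t(Suc (Suc m) := k) = t'(Suc (Suc m) := k')"
  have "k = k'" using fun_cong[OF e, of "Suc (Suc m)"] by simp
  moreover have "t = t'"
  proof
    fix i show "t i = t' i"
    proof (cases "i = Suc (Suc m)")
      case True then show ?thesis using t t' unfolding Phi_star_def by auto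
    next
      case False then show ?thesis using fun_cong[OF e, of i] by simp
    qed
  qed
  ultimately show "k = k' \<and> t = t'" by simp
qed

lemma finite_Phi: "finite (Phi_star (Suc m) n)"
proof (induction m arbitrary: n)
  case 0 then show ?case by (simp add: Phi_one)
next
  case (Suc m) then show ?case by (simp add: Phi_SucSuc)
qed

lemma sum_Phi: "(\<Sum>s\<in>Phi_star (Suc (Suc m)) n. g s) =
   (\<Sum>k\<le>n. \<Sum>t\<in>Phi_star (Suc m) (n-k). g (t(Suc (Suc m) := k)))"
  unfolding Phi_SucSuc
  by (subst sum.reindex[OF Phi_inj]) (simp add: sum.Sigma finite_Phi split_def)

lemma sum_rev_atMost: "(\<Sum>k\<le>n. f (n - k)) = (\<Sum>k\<le>(n::nat). f k)"
  by (rule sum.reindex_bij_witness[of _ "\<lambda>k. n-k" "\<lambda>k. n-k"]) auto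

lemma card_Phi: "card (Phi_star (Suc m) n) = (n + m choose n)"
proof (induction m arbitrary: n)
  case 0 then show ?case by (simp add: Phi_one)
next
  case (Suc m)
  have "card (Phi_star (Suc (Suc m)) n) = (\<Sum>s\<in>Phi_star (Suc (Suc m)) n. 1)" by simp
  also have "\<dots> = (\<Sum>k\<le>n. (n - k + m choose (n - k)))"
    by (subst sum_Phi) (simp add: Suc)
  also have "\<dots> = (\<Sum>k\<le>n. (m + k choose k))"
    using sum_rev_atMost[of "\<lambda>j. j + m choose j" n] by (simp add: add.commute)
  also have "\<dots> = n + Suc m choose n" by (simp only: sum_choose_lower) (metis add.commute add_Suc_right)
  finally show ?case .
qed

lemma weighted_choose: "(\<Sum>j\<le>n. (n + 1 - j) * (j + r choose j)) = (n + r + 2 choose n)"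
proof (induction n)
  case 0 then show ?case by simp
next
  case (Suc n)
  have l: "(\<Sum>j\<le>n. (j + r choose j)) = Suc (r + n) choose n"
    using sum_choose_lower[of r n] by (simp add: add.commute)
  have e1: "(\<Sum>j\<le>n. (Suc n + 1 - j) * (j + r choose j)) = (\<Sum>j\<le>n. (n + 1 - j) * (j + r choose j) + (j + r choose j))"
    by (rule sum.cong) (auto simp: Suc_diff_le)
  have "(\<Sum>j\<le>Suc n. (Suc n + 1 - j) * (j + r choose j))
      = (\<Sum>j\<le>n. (Suc n + 1 - j) * (j + r choose j)) + (Suc n + r choose Suc n)"
    by (simp add: sum.atMost_Suc)
  also have "\<dots> = (n + r + 2 choose n) + (Suc (r + n) choose n) + (Suc n + r choose Suc n)"
    by (simp only: e1 sum.distrib Suc l)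
  also have "\<dots> = Suc n + r + 2 choose Suc n"
    by (simp add: algebra_simps numeral_2_eq_2)
  finally show ?case .
qed

lemma sum_prod_Phi: "(\<Sum>s\<in>Phi_star (Suc m) n. \<Prod>\<nu>=1..Suc m. (s \<nu> + 1)) = (n + 2*m + 1 choose n)"
proof (induction m arbitrary: n)
  case 0 then show ?case by (simp add: Phi_one)
next
  case (Suc m)
  have pr: "(\<Prod>\<nu>=1..Suc (Suc m). ((t(Suc (Suc m) := k)) \<nu> + 1)) = (k+1) * (\<Prod>\<nu>=1..Suc m. (t \<nu> + 1))"
    for t :: "nat \<Rightarrow> nat" and k
  proof -
    have "(\<Prod>\<nu>=1..Suc m. ((t(Suc (Suc m) := k)) \<nu> + 1)) = (\<Prod>\<nu>=1..Suc m. (t \<nu> + 1))"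
      by (rule prod.cong) auto
    then show ?thesis by (simp add: prod.cl_ivl_Suc)
  qed
  have "(\<Sum>s\<in>Phi_star (Suc (Suc m)) n. \<Prod>\<nu>=1..Suc (Suc m). (s \<nu> + 1))
     = (\<Sum>k\<le>n. (k+1) * (n - k + 2*m + 1 choose (n - k)))"
    apply (subst sum_Phi)
    apply (simp only: pr sum_distrib_left[symmetric] Suc)
    done
  also have "\<dots> = (\<Sum>j\<le>n. (n - j + 1) * (j + (2*m+1) choose j))"
    using sum_rev_atMost[of "\<lambda>j. (n - j + 1) * (j + (2*m+1) choose j)" n]
    by (simp add: algebra_simps)
  also have "\<dots> = n + 2 * Suc m + 1 choose n"
    using weighted_choose[of n "2*m+1"] by (simp add: algebra_simps)
  finally show ?case .
qed

lemma E_prod_formula: "E_prod (Suc m) n = real (n + 2*m + 1 choose n) / real (n + m choose n)"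
proof -
  have "card (Phi_star (Suc m) n) > 0" by (simp add: card_Phi)
  then have ne: "Phi_star (Suc m) n \<noteq> {}" by auto
  have "E_prod (Suc m) n = (\<Sum>s\<in>Phi_star (Suc m) n. \<Prod>\<nu>=1..Suc m. real (s \<nu> + 1)) / card (Phi_star (Suc m) n)"
    unfolding E_prod_def by (rule integral_pmf_of_set[OF ne finite_Phi])
  also have "(\<Sum>s\<in>Phi_star (Suc m) n. \<Prod>\<nu>=1..Suc m. real (s \<nu> + 1)) = real (n + 2*m + 1 choose n)"
    by (simp only: of_nat_sum[symmetric] of_nat_prod[symmetric] sum_prod_Phi)
  finally show ?thesis by (simp add: card_Phi)
qed




lemma ln_upper3:
  fixes x :: real assumes x: "0 \<le> x"
  shows "ln (1 + x) \<le> x - x^2/2 + x^3/3"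
proof -
  let ?f = "\<lambda>t::real. t - t^2/2 + t^3/3 - ln (1 + t)"
  have "?f 0 \<le> ?f x"
  proof (rule DERIV_nonneg_imp_increasing_open[OF x])
    fix t :: real assume t: "0 < t" "t < x"
    have "(?f has_real_derivative (1 - t + t^2 - 1/(1+t))) (at t)"
      using t by (auto intro!: derivative_eq_intros simp: field_simps power2_eq_square)
    moreover have "1 - t + t^2 - 1/(1+t) = t^3/(1+t)"
      using t by (simp add: field_simps power2_eq_square power3_eq_cube)
    moreover have "t^3/(1+t) \<ge> 0" using t by simp
    ultimately show "\<exists>y. (?f has_real_derivative y) (at t) \<and> 0 \<le> y" by auto
  next
    show "continuous_on {0..x} ?f"
      by (intro continuous_intros) auto
  qed
  then show ?thesis by simp
qed

lemma ln_lower4: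
  fixes x :: real assumes x: "0 \<le> x"
  shows "x - x^2/2 + x^3/3 - x^4/4 \<le> ln (1 + x)"
proof -
  let ?f = "\<lambda>t::real. ln (1 + t) - (t - t^2/2 + t^3/3 - t^4/4)"
  have "?f 0 \<le> ?f x"
  proof (rule DERIV_nonneg_imp_increasing_open[OF x])
    fix t :: real assume t: "0 < t" "t < x"
    have "(?f has_real_derivative (1/(1+t) - (1 - t + t^2 - t^3))) (at t)"
      using t by (auto intro!: derivative_eq_intros simp: field_simps power2_eq_square power3_eq_cube)
    moreover have "1/(1+t) - (1 - t + t^2 - t^3) = t^4/(1+t)"
      using t by (simp add: field_simps power2_eq_square power3_eq_cube power4_eq_xxxx)
    moreover have "t^4/(1+t) \<ge> 0" using t by simp
    ultimately show "\<exists>y. (?f has_real_derivative y) (at t) \<and> 0 \<le> y" by auto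
  next
    show "continuous_on {0..x} ?f"
      by (intro continuous_intros) auto
  qed
  then show ?thesis by simp
qed

lemma d_bound:
  fixes y :: real assumes y: "0 < y" "y \<le> 1"
  shows "\<bar>1 - (1/y + 1/2) * ln (1 + y)\<bar> \<le> y^2"
proof -
  have U: "ln (1 + y) \<le> y - y^2/2 + y^3/3" using ln_upper3 y by simp
  have L: "y - y^2/2 + y^3/3 - y^4/4 \<le> ln (1 + y)" using ln_lower4 y by simp
  have pos: "1/y + 1/2 \<ge> 0" using y by simp
  have e1: "(1/y + 1/2) * (y - y^2/2 + y^3/3) = 1 + y^2/12 + y^3/6"
    using y by (simp add: field_simps eval_nat_numeral)
  have e2: "(1/y + 1/2) * (y - y^2/2 + y^3/3 - y^4/4) = 1 + y^2/12 - y^3/12 - y^4/8"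
    using y by (simp add: field_simps eval_nat_numeral)
  have m1: "(1/y + 1/2) * ln (1 + y) \<le> (1/y + 1/2) * (y - y^2/2 + y^3/3)"
    by (rule mult_left_mono[OF U pos])
  have m2: "(1/y + 1/2) * (y - y^2/2 + y^3/3 - y^4/4) \<le> (1/y + 1/2) * ln (1 + y)"
    by (rule mult_left_mono[OF L pos])
  have p3: "y^3 \<le> y^2" and p4: "y^4 \<le> y^2" using y by (auto intro: power_decreasing)
  have "y^3 \<ge> 0" "y^4 \<ge> 0" "y^2 \<ge> 0" using y by auto
  then have main: "\<And>P::real. P \<le> 1 + y^2/12 + y^3/6 \<Longrightarrow> 1 + y^2/12 - y^3/12 - y^4/8 \<le> P \<Longrightarrow> \<bar>1 - P\<bar> \<le> y^2"
    using p3 p4 unfolding abs_le_iff by (intro conjI) linarith+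
  show ?thesis by (rule main) (use m1 m2 e1 e2 in simp_all)
qed

definition sa :: "nat \<Rightarrow> real" where
  "sa k = ln (fact k) - (real k + 1/2) * ln (real k) + real k"

lemma sa_diff: "k \<ge> 1 \<Longrightarrow> sa (Suc k) - sa k = 1 - (real k + 1/2) * ln (1 + 1 / real k)"
proof -
  assume k: "k \<ge> 1"
  have e1: "ln (fact (Suc k) :: real) = ln (1 + real k) + ln (fact k)"
    by (simp add: ln_mult)
  have e2: "ln (1 + 1 / real k) = ln (1 + real k) - ln (real k)"
  proof -
    have "1 + 1 / real k = (1 + real k) / real k" using k by (simp add: field_simps)
    then show ?thesis using k by (simp add: ln_div)
  qed
  show ?thesis unfolding sa_def by (simp only: e1 e2 of_nat_Suc) (simp add: algebra_simps)
qed

lemma sa_conv: "convergent sa"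
proof -
  have summ: "summable (\<lambda>k. sa (Suc k) - sa k)"
  proof (rule summable_comparison_test'[where N=1])
    show "summable (\<lambda>k. inverse (real k ^ 2))"
      by (rule inverse_power_summable) simp
  next
    fix k :: nat assume k: "k \<ge> 1"
    have y: "0 < 1 / real k" "1 / real k \<le> 1" using k by auto
    have "1 / (1 / real k) = real k" by simp
    then have "norm (sa (Suc k) - sa k) = \<bar>1 - (1 / (1 / real k) + 1/2) * ln (1 + 1 / real k)\<bar>"
      using sa_diff[OF k] by simp
    also have "\<dots> \<le> (1 / real k)^2" by (rule d_bound[OF y])
    finally show "norm (sa (Suc k) - sa k) \<le> inverse (real k ^ 2)"
      by (simp add: power_divide inverse_eq_divide)
  qed
  have "(\<lambda>n. sa 0 + (\<Sum>k<n. sa (Suc k) - sa k)) \<longlonglongrightarrow> sa 0 + suminf (\<lambda>k. sa (Suc k) - sa k)"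
    by (intro tendsto_add tendsto_const summable_LIMSEQ summ)
  moreover have "(\<lambda>n. sa 0 + (\<Sum>k<n. sa (Suc k) - sa k)) = sa"
    by (rule ext) (simp add: sum_lessThan_telescope)
  ultimately show ?thesis unfolding convergent_def by auto
qed

definition rr :: "nat \<Rightarrow> real" where
  "rr k = fact k / (sqrt (real k) * (real k / exp 1) ^ k)"

lemma rr_exp: "k \<ge> 1 \<Longrightarrow> rr k = exp (sa k)"
proof -
  assume k: "k \<ge> 1"
  have pos: "rr k > 0" using k unfolding rr_def by simp
  have "ln (rr k) = sa k"
    using k unfolding rr_def sa_def
    by (simp add: ln_div ln_mult ln_sqrt ln_realpow algebra_simps)
  then show ?thesis using pos by (metis exp_ln)
qed

lemma rr_conv: "\<exists>c>0. rr \<longlonglongrightarrow> c"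
proof -
  obtain L where L: "sa \<longlonglongrightarrow> L" using sa_conv unfolding convergent_def by auto
  have "(\<lambda>k. exp (sa k)) \<longlonglongrightarrow> exp L" by (intro tendsto_exp L)
  moreover have "eventually (\<lambda>k. exp (sa k) = rr k) sequentially"
    using eventually_ge_at_top[of 1] by eventually_elim (simp add: rr_exp)
  ultimately have "rr \<longlonglongrightarrow> exp L" by (rule Lim_transform_eventually)
  then show ?thesis by (intro exI[of _ "exp L"]) auto
qed




lemma aux_field:
  fixes X Y Z V F a b c d :: real
  assumes "X \<noteq> 0" "Y \<noteq> 0" "Z \<noteq> 0" "V \<noteq> 0" "F \<noteq> 0" "a \<noteq> 0" "b \<noteq> 0" "c \<noteq> 0" "d \<noteq> 0"
  shows "(X / (F * Y)) / (Z / (F * V)) = (a * X) * (b * V) / ((c * Y) * (d * Z)) * (c * d) / (a * b)"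
  using assms by (simp add: field_simps)

lemma E_fact:
  assumes "m \<ge> 1"
  shows "E_prod m n = fact (n + 2*m) * fact m / (fact (2*m) * fact (n + m))
            * (real (2*m) * real (n + m)) / (real (n + 2*m) * real m)"
proof -
  obtain m' where m: "m = Suc m'" using assms by (cases m) auto
  have "E_prod m n = real (n + 2*m' + 1 choose n) / real (n + m' choose n)"
    unfolding m by (rule E_prod_formula)
  also have "\<dots> = (fact (n + 2*m' + 1) / (fact n * fact (2*m' + 1))) / (fact (n + m') / (fact n * fact m'))"
    by (subst (1 2) binomial_fact) auto
  also have "\<dots> = fact (n + 2*m) * fact m / (fact (2*m) * fact (n + m))
            * (real (2*m) * real (n + m)) / (real (n + 2*m) * real m)"
  proof -
    have a: "fact (n + 2*m) = real (n + 2*m) * (fact (n + 2*m' + 1) :: real)"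
      unfolding m by (simp add: algebra_simps)
    have b: "fact m = real m * (fact m' :: real)" unfolding m by simp
    have c: "fact (2*m) = real (2*m) * (fact (2*m' + 1) :: real)" unfolding m by (simp add: algebra_simps)
    have d: "fact (n + m) = real (n + m) * (fact (n + m') :: real)" unfolding m by (simp add: algebra_simps)
    show ?thesis unfolding a b c d by (rule aux_field) (simp_all add: m)
  qed
  finally show ?thesis .
qed




definition WW :: "nat \<Rightarrow> real" where "WW k = sqrt (real k) * (real k / exp 1) ^ k"

lemma fact_rr: "k \<ge> 1 \<Longrightarrow> fact k = rr k * WW k"
  unfolding rr_def WW_def by simp

lemma WW_powr: "k \<ge> 1 \<Longrightarrow> WW k = sqrt (real k) * (real k / exp 1) powr (real k)"
  unfolding WW_def by (simp add: powr_realpow)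

lemma pw:
  fixes x a :: real assumes "x > 0" "a > 0"
  shows "(a * x / exp 1) powr (a * x) = (x / exp 1) powr (a * x) * (a powr a) powr x"
proof -
  have "(a * x / exp 1) powr (a * x) = (a * (x / exp 1)) powr (a * x)" by simp
  also have "\<dots> = a powr (a * x) * (x / exp 1) powr (a * x)"
    using powr_mult[of a "x / exp 1" "a * x"] assms by simp
  also have "a powr (a * x) = (a powr a) powr x" by (simp add: powr_powr)
  finally show ?thesis by simp
qed

lemma sqrt_part:
  fixes x a1 a2 a3 a4 :: real
  assumes "x > 0" "a1 > 0" "a2 > 0" "a3 > 0" "a4 > 0"
  shows "sqrt (a1 * x) * sqrt (a2 * x) / (sqrt (a3 * x) * sqrt (a4 * x)) * ((a3 * x) * (a4 * x)) / ((a1 * x) * (a2 * x))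
         = sqrt (a3 * a4 / (a1 * a2))"
proof -
  let ?u = "sqrt (a1 * x) * sqrt (a2 * x) / (sqrt (a3 * x) * sqrt (a4 * x)) * ((a3 * x) * (a4 * x)) / ((a1 * x) * (a2 * x))"
  have "?u ^ 2 = (a1 * x) * (a2 * x) / ((a3 * x) * (a4 * x)) * ((a3 * x) * (a4 * x))^2 / ((a1 * x) * (a2 * x))^2"
    using assms by (simp add: power_mult_distrib power_divide)
  also have "\<dots> = a3 * a4 / (a1 * a2)" using assms by (simp add: field_simps power2_eq_square)
  finally have sq: "?u ^ 2 = a3 * a4 / (a1 * a2)" .
  have "?u \<ge> 0" using assms by simp
  then show ?thesis using sq real_sqrt_unique by metis
qed

lemma power_part:
  fixes x a1 a2 a3 a4 :: real
  assumes "x > 0" "a1 > 0" "a2 > 0" "a3 > 0" "a4 > 0" "a1 + a2 = a3 + a4"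
  shows "(a1 * x / exp 1) powr (a1 * x) * (a2 * x / exp 1) powr (a2 * x)
          / ((a3 * x / exp 1) powr (a3 * x) * (a4 * x / exp 1) powr (a4 * x))
        = ((a1 powr a1) * (a2 powr a2) / ((a3 powr a3) * (a4 powr a4))) powr x"
proof -
  let ?E = "x / exp 1"
  have E: "?E powr (a1 * x) * ?E powr (a2 * x) = ?E powr (a3 * x) * ?E powr (a4 * x)"
    by (simp add: powr_add[symmetric] distrib_right[symmetric] assms(6))
  have Epos: "?E powr (a3 * x) * ?E powr (a4 * x) > 0" using assms by simp
  have "(a1 * x / exp 1) powr (a1 * x) * (a2 * x / exp 1) powr (a2 * x)
          / ((a3 * x / exp 1) powr (a3 * x) * (a4 * x / exp 1) powr (a4 * x))
     = (?E powr (a1 * x) * ?E powr (a2 * x)) * ((a1 powr a1) powr x * (a2 powr a2) powr x)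
        / ((?E powr (a3 * x) * ?E powr (a4 * x)) * ((a3 powr a3) powr x * (a4 powr a4) powr x))"
    using assms by (simp add: pw mult_ac)
  also have "\<dots> = ((a1 powr a1) powr x * (a2 powr a2) powr x) / ((a3 powr a3) powr x * (a4 powr a4) powr x)"
    unfolding E by (rule mult_divide_mult_cancel_left) (use Epos assms in simp)
  also have "\<dots> = ((a1 powr a1) * (a2 powr a2) / ((a3 powr a3) * (a4 powr a4))) powr x"
    using assms by (simp add: powr_mult powr_divide)
  finally show ?thesis .
qed

lemma K_eq:
  fixes \<theta> :: real assumes "\<theta> > 0"
  shows "((1 + 2*\<theta>) powr (1 + 2*\<theta>)) * (\<theta> powr \<theta>) / (((2*\<theta>) powr (2*\<theta>)) * ((1 + \<theta>) powr (1 + \<theta>)))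
       = (2 * \<theta> + 1) powr (2 * \<theta> + 1) / ((4 * \<theta>) powr \<theta> * (\<theta> + 1) powr (\<theta> + 1))"
proof -
  have "(2*\<theta>) powr (2*\<theta>) = ((2*\<theta>) powr 2) powr \<theta>" by (simp add: powr_powr mult.commute)
  also have "(2*\<theta>) powr 2 = (4*\<theta>) * \<theta>" using assms by (simp add: powr_numeral power2_eq_square)
  also have "((4*\<theta>) * \<theta>) powr \<theta> = (4*\<theta>) powr \<theta> * \<theta> powr \<theta>" using assms by (simp add: powr_mult)
  finally have e: "(2*\<theta>) powr (2*\<theta>) = (4*\<theta>) powr \<theta> * \<theta> powr \<theta>" .
  show ?thesis unfolding e using assms by (simp add: field_simps add.commute)
qed




lemma aux_field2:
  fixes r1 r2 r3 r4 w1 w2 w3 w4 N D :: real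
  assumes "r1 \<noteq> 0" "r2 \<noteq> 0" "r3 \<noteq> 0" "r4 \<noteq> 0" "w1 \<noteq> 0" "w2 \<noteq> 0" "w3 \<noteq> 0" "w4 \<noteq> 0" "D \<noteq> 0"
  shows "(r1 * w1) * (r2 * w2) / ((r3 * w3) * (r4 * w4)) * N / D
       = (r1 * r2 / (r3 * r4)) * (w1 * w2 / (w3 * w4) * N / D)"
  using assms by (simp add: field_simps)

lemma aux_field3:
  fixes s1 s2 s3 s4 q1 q2 q3 q4 N D :: real
  assumes "s3 \<noteq> 0" "s4 \<noteq> 0" "q3 \<noteq> 0" "q4 \<noteq> 0" "D \<noteq> 0"
  shows "(s1 * q1) * (s2 * q2) / ((s3 * q3) * (s4 * q4)) * N / D
       = (s1 * s2 / (s3 * s4) * N / D) * (q1 * q2 / (q3 * q4))"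
  using assms by (simp add: field_simps)

lemma E_identity:
  fixes \<theta> :: real
  assumes n: "n \<ge> 1" and m: "m \<ge> 1" and th: "\<theta> > 0" and mth: "real m = \<theta> * real n"
  shows "E_prod m n = (rr (n + 2*m) * rr m / (rr (2*m) * rr (n + m))) *
     (sqrt (2 * (\<theta> + 1) / (2 * \<theta> + 1)) *
              ((2 * \<theta> + 1) powr (2 * \<theta> + 1) /
               ((4 * \<theta>) powr \<theta> * (\<theta> + 1) powr (\<theta> + 1))) ^ n)"
proof -
  define x where "x = real n"
  have x: "x > 0" using n unfolding x_def by simp
  have hA: "real (n + 2*m) = (1 + 2*\<theta>) * x" and hB: "real m = \<theta> * x"
   and hC: "real (2*m) = (2*\<theta>) * x" and hD: "real (n + m) = (1 + \<theta>) * x"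
    using mth unfolding x_def by (simp_all add: algebra_simps)
  have rpos: "rr k > 0" if "k \<ge> 1" for k using that unfolding rr_def by simp
  have wpos: "WW k > 0" if "k \<ge> 1" for k using that unfolding WW_def by simp
  have "E_prod m n = fact (n + 2*m) * fact m / (fact (2*m) * fact (n + m))
            * (real (2*m) * real (n + m)) / (real (n + 2*m) * real m)"
    by (rule E_fact[OF m])
  also have "\<dots> = (rr (n + 2*m) * WW (n + 2*m)) * (rr m * WW m) / ((rr (2*m) * WW (2*m)) * (rr (n + m) * WW (n + m)))
            * (real (2*m) * real (n + m)) / (real (n + 2*m) * real m)"
    using n m by (simp add: fact_rr)
  also have "\<dots> = (rr (n + 2*m) * rr m / (rr (2*m) * rr (n + m))) *
      (WW (n + 2*m) * WW m / (WW (2*m) * WW (n + m)) * (real (2*m) * real (n + m)) / (real (n + 2*m) * real m))"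
  proof (rule aux_field2)
    have k: "n + 2*m \<ge> 1" "m \<ge> 1" "2*m \<ge> 1" "n + m \<ge> 1" using n m by auto
    show "rr (n + 2*m) \<noteq> 0" "rr m \<noteq> 0" "rr (2*m) \<noteq> 0" "rr (n + m) \<noteq> 0"
      using rpos[OF k(1)] rpos[OF k(2)] rpos[OF k(3)] rpos[OF k(4)] by auto
    show "WW (n + 2*m) \<noteq> 0" "WW m \<noteq> 0" "WW (2*m) \<noteq> 0" "WW (n + m) \<noteq> 0"
      using wpos[OF k(1)] wpos[OF k(2)] wpos[OF k(3)] wpos[OF k(4)] by auto
    show "real (n + 2*m) * real m \<noteq> 0" using n m by simp
  qed
  also have "WW (n + 2*m) * WW m / (WW (2*m) * WW (n + m)) * (real (2*m) * real (n + m)) / (real (n + 2*m) * real m)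
     = (sqrt ((1 + 2*\<theta>) * x) * ((1 + 2*\<theta>) * x / exp 1) powr ((1 + 2*\<theta>) * x)) *
       (sqrt (\<theta> * x) * (\<theta> * x / exp 1) powr (\<theta> * x)) /
       ((sqrt ((2*\<theta>) * x) * ((2*\<theta>) * x / exp 1) powr ((2*\<theta>) * x)) *
        (sqrt ((1 + \<theta>) * x) * ((1 + \<theta>) * x / exp 1) powr ((1 + \<theta>) * x)))
       * (((2*\<theta>) * x) * ((1 + \<theta>) * x)) / (((1 + 2*\<theta>) * x) * (\<theta> * x))"
    using n m by (simp only: WW_powr hA hB hC hD)
  also have "\<dots> = (sqrt ((1 + 2*\<theta>) * x) * sqrt (\<theta> * x) / (sqrt ((2*\<theta>) * x) * sqrt ((1 + \<theta>) * x))
        * (((2*\<theta>) * x) * ((1 + \<theta>) * x)) / (((1 + 2*\<theta>) * x) * (\<theta> * x))) *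
       (((1 + 2*\<theta>) * x / exp 1) powr ((1 + 2*\<theta>) * x) * (\<theta> * x / exp 1) powr (\<theta> * x) /
        (((2*\<theta>) * x / exp 1) powr ((2*\<theta>) * x) * ((1 + \<theta>) * x / exp 1) powr ((1 + \<theta>) * x)))"
    by (rule aux_field3) (use x th in simp_all)
  also have "\<dots> = sqrt ((2*\<theta>) * (1 + \<theta>) / ((1 + 2*\<theta>) * \<theta>)) *
       (((1 + 2*\<theta>) powr (1 + 2*\<theta>)) * (\<theta> powr \<theta>) / (((2*\<theta>) powr (2*\<theta>)) * ((1 + \<theta>) powr (1 + \<theta>)))) powr x"
    using x th by (simp only: sqrt_part power_part)
  also have "(2*\<theta>) * (1 + \<theta>) / ((1 + 2*\<theta>) * \<theta>) = 2 * (\<theta> + 1) / (2 * \<theta> + 1)"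
  proof -
    have d1: "(1 + 2*\<theta>) * \<theta> \<noteq> 0" "2*\<theta> + 1 \<noteq> 0" using th by auto
    show ?thesis by (simp only: frac_eq_eq[OF d1]) (simp add: algebra_simps)
  qed
  also have "((1 + 2*\<theta>) powr (1 + 2*\<theta>)) * (\<theta> powr \<theta>) / (((2*\<theta>) powr (2*\<theta>)) * ((1 + \<theta>) powr (1 + \<theta>)))
      = (2 * \<theta> + 1) powr (2 * \<theta> + 1) / ((4 * \<theta>) powr \<theta> * (\<theta> + 1) powr (\<theta> + 1))"
    by (rule K_eq[OF th])
  also have "((2 * \<theta> + 1) powr (2 * \<theta> + 1) / ((4 * \<theta>) powr \<theta> * (\<theta> + 1) powr (\<theta> + 1))) powr x
     = ((2 * \<theta> + 1) powr (2 * \<theta> + 1) / ((4 * \<theta>) powr \<theta> * (\<theta> + 1) powr (\<theta> + 1))) ^ n"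
    unfolding x_def using th by (intro powr_realpow) simp
  finally show ?thesis .
qed




lemma M_at_top:
  fixes \<theta> :: real assumes th: "\<theta> > 0"
  shows "filterlim (\<lambda>n::nat. nat \<lfloor>\<theta> * real n\<rfloor>) at_top sequentially"
  unfolding filterlim_at_top
proof
  fix Z :: nat
  show "eventually (\<lambda>n. Z \<le> nat \<lfloor>\<theta> * real n\<rfloor>) sequentially"
    using eventually_ge_at_top[of "nat \<lceil>real Z / \<theta>\<rceil>"]
  proof eventually_elim
    case (elim n)
    have "real Z / \<theta> \<le> real (nat \<lceil>real Z / \<theta>\<rceil>)" by (rule real_nat_ceiling_ge)
    also have "\<dots> \<le> real n" using elim by simp
    finally have "real Z / \<theta> \<le> real n" .
    then have "real Z \<le> \<theta> * real n" using th by (simp add: field_simps)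
    then have "int Z \<le> \<lfloor>\<theta> * real n\<rfloor>" by (simp add: le_floor_iff)
    then show ?case by simp
  qed
qed

lemma R_tendsto:
  fixes \<theta> :: real assumes th: "\<theta> > 0"
  shows "((\<lambda>n::nat. let m = nat \<lfloor>\<theta> * real n\<rfloor> in rr (n + 2*m) * rr m / (rr (2*m) * rr (n + m))) \<longlongrightarrow> 1) sequentially"
proof -
  obtain c where c: "c > 0" "rr \<longlonglongrightarrow> c" using rr_conv by auto
  define M where "M = (\<lambda>n::nat. nat \<lfloor>\<theta> * real n\<rfloor>)"
  have M: "filterlim M at_top sequentially" unfolding M_def by (rule M_at_top[OF th])
  have l1: "filterlim (\<lambda>n. n + 2 * M n) at_top sequentially"
    by (rule filterlim_at_top_mono[OF M]) auto
  have l2: "filterlim (\<lambda>n. 2 * M n) at_top sequentially"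
    by (rule filterlim_at_top_mono[OF M]) auto
  have l3: "filterlim (\<lambda>n. n + M n) at_top sequentially"
    by (rule filterlim_at_top_mono[OF M]) auto
  have "((\<lambda>n. rr (n + 2 * M n) * rr (M n) / (rr (2 * M n) * rr (n + M n))) \<longlongrightarrow> c * c / (c * c)) sequentially"
    by (intro tendsto_intros filterlim_compose[OF c(2)] l1 l2 l3 M) (use c in simp)
  then show ?thesis using c unfolding M_def Let_def by simp
qed

lemma part1:
  fixes \<theta> :: real
  assumes th: "\<theta> > 0"
  shows "((\<lambda>n::nat. E_prod (nat \<lfloor>\<theta> * real n\<rfloor>) n)
           \<sim>[sequentially \<sqinter> principal {n. \<theta> * real n \<in> \<int>}]
         (\<lambda>n. sqrt (2 * (\<theta> + 1) / (2 * \<theta> + 1)) *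
              ((2 * \<theta> + 1) powr (2 * \<theta> + 1) /
               ((4 * \<theta>) powr \<theta> * (\<theta> + 1) powr (\<theta> + 1))) ^ n))"
    (is "?E \<sim>[?F] ?T")
proof (rule asymp_equivI')
  define R where "R = (\<lambda>n::nat. let m = nat \<lfloor>\<theta> * real n\<rfloor> in rr (n + 2*m) * rr m / (rr (2*m) * rr (n + m)))"
  have R: "(R \<longlongrightarrow> 1) ?F"
    unfolding R_def by (rule tendsto_mono[OF inf_le1 R_tendsto[OF th]])
  have Tnz: "?T n \<noteq> 0" for n
    using th by simp
  have ev: "eventually (\<lambda>n. R n = ?E n / ?T n) ?F"
  proof -
    have "eventually (\<lambda>n. 1 \<le> nat \<lfloor>\<theta> * real n\<rfloor>) sequentially"
      using M_at_top[OF th] unfolding filterlim_at_top by blast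
    then have "eventually (\<lambda>n. n \<ge> 1 \<and> 1 \<le> nat \<lfloor>\<theta> * real n\<rfloor>) sequentially"
      using eventually_conj[OF eventually_ge_at_top[of "1::nat"]] by blast
    then have "eventually (\<lambda>n. n \<in> {n. \<theta> * real n \<in> \<int>} \<longrightarrow> R n = ?E n / ?T n) sequentially"
    proof eventually_elim
      case (elim n)
      show ?case
      proof
        assume "n \<in> {n. \<theta> * real n \<in> \<int>}"
        then obtain z where z: "\<theta> * real n = of_int z" by (auto elim: Ints_cases)
        have "z \<ge> 0" using z th by (metis of_int_0_le_iff zero_le_mult_iff of_nat_0_le_iff less_le)
        then have mth: "real (nat \<lfloor>\<theta> * real n\<rfloor>) = \<theta> * real n" using z by simp
        have "?E n = R n * ?T n"
          unfolding R_def Let_def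
          by (rule E_identity) (use elim th mth in auto)
        then show "R n = ?E n / ?T n" using Tnz[of n] by (metis nonzero_mult_div_cancel_right)
      qed
    qed
    then show ?thesis by (simp add: eventually_inf_principal)
  qed
  show "((\<lambda>n. ?E n / ?T n) \<longlongrightarrow> 1) ?F"
    by (rule Lim_transform_eventually[OF R ev])
qed



theorem corollary2:
  fixes \<theta> :: real
  assumes "\<theta> > 0"
  shows "((\<lambda>n::nat. E_prod (nat \<lfloor>\<theta> * real n\<rfloor>) n)
           \<sim>[sequentially \<sqinter> principal {n. \<theta> * real n \<in> \<int>}]
         (\<lambda>n. sqrt (2 * (\<theta> + 1) / (2 * \<theta> + 1)) *
              ((2 * \<theta> + 1) powr (2 * \<theta> + 1) /
               ((4 * \<theta>) powr \<theta> * (\<theta> + 1) powr (\<theta> + 1))) ^ n)) \<and>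
         ((\<lambda>n::nat. E_prod n n) \<sim>[sequentially] (\<lambda>n. sqrt (4 / 3) * (27 / 16) ^ n))"
proof
  show "((\<lambda>n::nat. E_prod (nat \<lfloor>\<theta> * real n\<rfloor>) n)
           \<sim>[sequentially \<sqinter> principal {n. \<theta> * real n \<in> \<int>}]
         (\<lambda>n. sqrt (2 * (\<theta> + 1) / (2 * \<theta> + 1)) *
              ((2 * \<theta> + 1) powr (2 * \<theta> + 1) /
               ((4 * \<theta>) powr \<theta> * (\<theta> + 1) powr (\<theta> + 1))) ^ n))"
    by (rule part1[OF assms])
  show "((\<lambda>n::nat. E_prod n n) \<sim>[sequentially] (\<lambda>n. sqrt (4 / 3) * (27 / 16) ^ n))"
    using part1[of 1] by (simp add: powr_numeral)
qed

end
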